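(* Let $k\ge 2$, let $B=M\cup\{\omega_1,\ldots,\omega_p\}$ with $p\ge 1$ and $\omega_1,\ldots,\omega_p\in P_k\setminus M$, and let $F$ be a finite system of functions from $P_k(n)$. Then $$I_B(F)\ge\left\lceil \log_{d(B)+1}\bigl(d(F)+1\bigr)\right\rceil .$$
   Context: Let $k\ge 2$ be an integer and $E_k=\{0,1,\ldots,k-1\}$. $P_k(n)$ denotes the set of all functions $E_k^n\to E_k$, and $P_k=\bigcup_n P_k(n)$. Tuples in $E_k^n$ are ordered componentwise: $\tilde\alpha\le\tilde\beta$ iff $\alpha_j\le\beta_j$ for all $j$. A function $f$ is monotone if $\tilde\alpha\le\tilde\beta$ implies $f(\tilde\alpha)\le f(\tilde\beta)$; $M$ is the set of all monotone functions in $P_k$ (of all arities, including constants). A basis is a set $B=M\cup\{\omega_1,\ldots,\omega_p\}$ with $p\ge1$ and $\omega_i\in P_k\setminus M$. A circuit over $B$ with inputs $x_1,\ldots,x_n$ is a finite directed acyclic graph whose source nodes are labelled by the variables $x_1,\ldots,x_n$ and each of whose other nodes (gates) is labelled by a $q$-ary function from $B$ and has $q$ ordered incoming edges; each node computes a function of $P_k(n)$ in the obvious way. A circuit realizes a system $F$ of functions of $x_1,\ldots,x_n$ if every function of $F$ is computed at some node. Gates labelled by functions of $M$ have weight $0$, gates labelled by some $\omega_i$ have weight $1$. The non-monotone complexity $I_B(S)$ of a circuit $S$ is the sum of the weights of its gates; $I_B(F)$ is the minimum of $I_B(S)$ over all circuits $S$ over $B$ realizing $F$, and $I_B(f)=I_B(\{f\})$.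 A chain is a sequence $\tilde\alpha_1,\ldots,\tilde\alpha_r$ of pairwise distinct tuples of $E_k^n$ with $\tilde\alpha_i\le\tilde\alpha_{i+1}$ for $i=1,\ldots,r-1$. A pair $(\tilde\alpha,\tilde\beta)$ with $\tilde\alpha\le\tilde\beta$ is a jump for a system $F$ if $f(\tilde\alpha)>f(\tilde\beta)$ for at least one $f\in F$. For a chain $C=(\tilde\alpha_1,\ldots,\tilde\alpha_r)$, the decrease $d_C(F)$ is the number of $i\in\{1,\ldots,r-1\}$ such that $(\tilde\alpha_i,\tilde\alpha_{i+1})$ is a jump for $F$. The decrease $d(F)$ is the maximum of $d_C(F)$ over all chains $C$ in $E_k^n$; $d(f)=d(\{f\})$. Finally $d(B)=\max\{d(\omega_1),\ldots,d(\omega_p)\}$. *)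

theory Defs
  imports Complex_Main "HOL-Library.Extended_Nat"
begin

text \<open>Tuples of E_k^n are lists of length n with entries below k.
  A function of P_k(n) is represented by a map on lists; only its values on E_k^n matter.\<close>

definition tuples :: "nat \<Rightarrow> nat \<Rightarrow> nat list set" where
  "tuples k n = {xs. length xs = n \<and> (\<forall>x\<in>set xs. x < k)}"

definition tle :: "nat list \<Rightarrow> nat list \<Rightarrow> bool" where
  "tle a b \<longleftrightarrow> list_all2 (\<le>) a b"

definition in_P :: "nat \<Rightarrow> nat \<Rightarrow> (nat list \<Rightarrow> nat) \<Rightarrow> bool" where
  "in_P k n f \<longleftrightarrow> (\<forall>xs\<in>tuples k n. f xs < k)"

definition monotone_fun :: "nat \<Rightarrow> nat \<Rightarrow> (nat list \<Rightarrow> nat) \<Rightarrow> bool" where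
  "monotone_fun k n f \<longleftrightarrow>
     (\<forall>a\<in>tuples k n. \<forall>b\<in>tuples k n. tle a b \<longrightarrow> f a \<le> f b)"

text \<open>Circuits: nodes 0..n-1 are the inputs x_1..x_n; gate j is node n+j and may only
  read nodes with smaller index (topological order of the DAG).
  MGate g args: gate labelled by a monotone function g (weight 0);
  OGate i args: gate labelled by omega_i (weight 1).\<close>

datatype gate = MGate "nat list \<Rightarrow> nat" "nat list" | OGate nat "nat list"

fun gate_args :: "gate \<Rightarrow> nat list" where
  "gate_args (MGate g as) = as"
| "gate_args (OGate i as) = as"

fun gate_apply :: "(nat \<Rightarrow> nat list \<Rightarrow> nat) \<Rightarrow> gate \<Rightarrow> nat list \<Rightarrow> nat" where
  "gate_apply \<omega> (MGate g as) vals = g (map (\<lambda>j. vals ! j) as)"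
| "gate_apply \<omega> (OGate i as) vals = \<omega> i (map (\<lambda>j. vals ! j) as)"

definition circ_vals :: "(nat \<Rightarrow> nat list \<Rightarrow> nat) \<Rightarrow> gate list \<Rightarrow> nat list \<Rightarrow> nat list" where
  "circ_vals \<omega> gs xs = foldl (\<lambda>vals g. vals @ [gate_apply \<omega> g vals]) xs gs"

fun gate_ok :: "nat \<Rightarrow> nat \<Rightarrow> (nat \<Rightarrow> nat) \<Rightarrow> gate \<Rightarrow> bool" where
  "gate_ok k p ar (MGate g as) \<longleftrightarrow> in_P k (length as) g \<and> monotone_fun k (length as) g"
| "gate_ok k p ar (OGate i as) \<longleftrightarrow> i < p \<and> length as = ar i"

definition wf_circuit :: "nat \<Rightarrow> nat \<Rightarrow> (nat \<Rightarrow> nat) \<Rightarrow> nat \<Rightarrow> gate list \<Rightarrow> bool" where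
  "wf_circuit k p ar n gs \<longleftrightarrow>
     (\<forall>j<length gs. gate_ok k p ar (gs ! j) \<and> (\<forall>a\<in>set (gate_args (gs ! j)). a < n + j))"

fun is_omega_gate :: "gate \<Rightarrow> bool" where
  "is_omega_gate (MGate g as) = False"
| "is_omega_gate (OGate i as) = True"

definition circ_cost :: "gate list \<Rightarrow> nat" where
  "circ_cost gs = length (filter is_omega_gate gs)"

definition realizes ::
  "nat \<Rightarrow> (nat \<Rightarrow> nat list \<Rightarrow> nat) \<Rightarrow> nat \<Rightarrow> gate list \<Rightarrow> (nat list \<Rightarrow> nat) set \<Rightarrow> bool" where
  "realizes k \<omega> n gs F \<longleftrightarrow>
     (\<forall>f\<in>F. \<exists>v < n + length gs. \<forall>xs\<in>tuples k n. circ_vals \<omega> gs xs ! v = f xs)"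

text \<open>Non-monotone complexity I_B(F) (infinite if F is not realizable).\<close>
definition I_B ::
  "nat \<Rightarrow> nat \<Rightarrow> (nat \<Rightarrow> nat list \<Rightarrow> nat) \<Rightarrow> (nat \<Rightarrow> nat) \<Rightarrow> nat \<Rightarrow> (nat list \<Rightarrow> nat) set \<Rightarrow> enat" where
  "I_B k p \<omega> ar n F =
     (INF gs \<in> {gs. wf_circuit k p ar n gs \<and> realizes k \<omega> n gs F}. enat (circ_cost gs))"

definition is_chain :: "nat \<Rightarrow> nat \<Rightarrow> nat list list \<Rightarrow> bool" where
  "is_chain k n c \<longleftrightarrow> set c \<subseteq> tuples k n \<and> distinct c \<and>
     (\<forall>i. Suc i < length c \<longrightarrow> tle (c ! i) (c ! Suc i))"

definition is_jump :: "(nat list \<Rightarrow> nat) set \<Rightarrow> nat list \<Rightarrow> nat list \<Rightarrow> bool" where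
  "is_jump F a b \<longleftrightarrow> tle a b \<and> (\<exists>f\<in>F. f a > f b)"

definition chain_decrease :: "(nat list \<Rightarrow> nat) set \<Rightarrow> nat list list \<Rightarrow> nat" where
  "chain_decrease F c = card {i. Suc i < length c \<and> is_jump F (c ! i) (c ! Suc i)}"

definition decrease :: "nat \<Rightarrow> nat \<Rightarrow> (nat list \<Rightarrow> nat) set \<Rightarrow> nat" where
  "decrease k n F = Max {chain_decrease F c | c. is_chain k n c}"

definition decrease_B :: "nat \<Rightarrow> nat \<Rightarrow> (nat \<Rightarrow> nat list \<Rightarrow> nat) \<Rightarrow> (nat \<Rightarrow> nat) \<Rightarrow> nat" where
  "decrease_B k p \<omega> ar = Max {decrease k (ar i) {\<omega> i} | i. i < p}"

end

theory Submission
  imports Defs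
begin

lemma tle_refl: "tle a a"
  unfolding tle_def by (simp add: list_all2_refl)

lemma tle_trans: "tle a b \<Longrightarrow> tle b c \<Longrightarrow> tle a c"
  unfolding tle_def using list_all2_trans[of "(\<le>)" "(\<le>)" "(\<le>)"] order_trans by blast

lemma tle_antisym: "tle a b \<Longrightarrow> tle b a \<Longrightarrow> a = b"
  unfolding tle_def by (rule list_all2_antisym) auto

lemma tle_snoc: "length u = length u' \<Longrightarrow> tle (u @ [a]) (u' @ [b]) \<longleftrightarrow> tle u u' \<and> a \<le> b"
  unfolding tle_def by (simp add: list_all2_append)

lemma tle_nth: "tle u u' \<Longrightarrow> v < length u \<Longrightarrow> u ! v \<le> u' ! v"
  unfolding tle_def by (simp add: list_all2_conv_all_nth)

lemma tle_map: "tle u u' \<Longrightarrow> \<forall>a\<in>set as. a < length u \<Longrightarrow>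
   tle (map (\<lambda>j. u ! j) as) (map (\<lambda>j. u' ! j) as)"
  unfolding tle_def by (auto simp add: list_all2_conv_all_nth)

lemma finite_tuples: "finite (tuples k n)"
proof -
  have "tuples k n \<subseteq> {xs. set xs \<subseteq> {..<k} \<and> length xs = n}"
    unfolding tuples_def by auto
  moreover have "finite {xs. set xs \<subseteq> {..<k} \<and> length xs = n}"
    by (rule finite_lists_length_eq) simp
  ultimately show ?thesis by (rule finite_subset)
qed

lemma chain_decrease_le_len: "chain_decrease F c \<le> length c"
proof -
  have "{i. Suc i < length c \<and> is_jump F (c ! i) (c ! Suc i)} \<subseteq> {..<length c}" by auto
  then show ?thesis unfolding chain_decrease_def
    by (metis card_lessThan card_mono finite_lessThan)
qed

lemma chain_len: "is_chain k m c \<Longrightarrow> length c \<le> card (tuples k m)"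
  unfolding is_chain_def
  by (metis card_mono distinct_card finite_tuples)

lemma dec_ge: assumes "is_chain k m c" shows "chain_decrease F c \<le> decrease k m F"
proof -
  have "{chain_decrease F c | c. is_chain k m c} \<subseteq> {..card (tuples k m)}"
    using chain_decrease_le_len chain_len by (fastforce intro: le_trans)
  then have "finite {chain_decrease F c | c. is_chain k m c}"
    using finite_subset by blast
  then show ?thesis unfolding decrease_def using assms by (auto intro: Max_ge)
qed

lemma chain_exists:
  assumes "\<forall>i<Suc r. x i \<in> tuples k m" "\<forall>i. Suc i < Suc r \<longrightarrow> tle (x i) (x (Suc i))"
  shows "\<exists>c. is_chain k m c \<and> c \<noteq> [] \<and> last c = x r \<and> (\<forall>y\<in>set c. tle y (last c)) \<and>
     card {i. Suc i < Suc r \<and> f (x (Suc i)) < f (x i)} \<le> chain_decrease {f} c"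
  using assms
proof (induction r)
  case 0
  then show ?case
    by (intro exI[of _ "[x 0]"]) (auto simp: is_chain_def tle_refl)
next
  case (Suc r)
  then obtain c where c: "is_chain k m c" "c \<noteq> []" "last c = x r" "\<forall>y\<in>set c. tle y (last c)"
    "card {i. Suc i < Suc r \<and> f (x (Suc i)) < f (x i)} \<le> chain_decrease {f} c"
    by auto
  let ?y = "x (Suc r)"
  let ?D = "{i. Suc i < Suc r \<and> f (x (Suc i)) < f (x i)}"
  let ?D' = "{i. Suc i < Suc (Suc r) \<and> f (x (Suc i)) < f (x i)}"
  have fD: "finite ?D" by (rule finite_subset[of _ "{..<Suc r}"]) auto
  have le: "tle (x r) ?y" using Suc.prems by auto
  show ?case
  proof (cases "?y = x r")
    case True
    have "?D' = ?D" using True by (auto simp: less_Suc_eq)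
    then show ?thesis using c True by (intro exI[of _ c]) simp
  next
    case False
    let ?c = "c @ [?y]"
    have ny: "?y \<notin> set c"
    proof
      assume "?y \<in> set c"
      then have "tle ?y (x r)" using c by auto
      then show False using le False tle_antisym by blast
    qed
    have chain: "is_chain k m ?c"
      unfolding is_chain_def
    proof (intro conjI allI impI)
      show "set ?c \<subseteq> tuples k m" using c Suc.prems unfolding is_chain_def by auto
      show "distinct ?c" using c ny unfolding is_chain_def by auto
      fix i assume i: "Suc i < length ?c"
      show "tle (?c ! i) (?c ! Suc i)"
      proof (cases "Suc i < length c")
        case True
        then show ?thesis using c unfolding is_chain_def by (simp add: nth_append)
      next
        case False
        then have "i = length c - 1" "Suc i = length c" using i by auto
        then show ?thesis using c le by (simp add: nth_append last_conv_nth)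
      qed
    qed
    let ?J = "{i. Suc i < length c \<and> is_jump {f} (c ! i) (c ! Suc i)}"
    let ?J' = "{i. Suc i < length ?c \<and> is_jump {f} (?c ! i) (?c ! Suc i)}"
    have fJ': "finite ?J'" by (rule finite_subset[of _ "{..<length ?c}"]) auto
    have sub1: "?J \<subseteq> ?J'" by (auto simp: nth_append)
    have cd: "chain_decrease {f} c + (if f ?y < f (x r) then 1 else 0) \<le> chain_decrease {f} ?c"
    proof (cases "f ?y < f (x r)")
      case True
      have "length c - 1 \<in> ?J'" "length c - 1 \<notin> ?J"
        using True c le by (auto simp: nth_append last_conv_nth is_jump_def)
      then have ins: "insert (length c - 1) ?J \<subseteq> ?J'" and nin: "length c - 1 \<notin> ?J"
        using sub1 by auto
      have fJ: "finite ?J" using fJ' sub1 finite_subset by blast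
      have "card (insert (length c - 1) ?J) = Suc (card ?J)" using fJ nin by simp
      moreover have "card (insert (length c - 1) ?J) \<le> card ?J'" using card_mono[OF fJ' ins] .
      ultimately have "Suc (card ?J) \<le> card ?J'" by simp
      then show ?thesis using True unfolding chain_decrease_def by simp
    next
      case False
      then show ?thesis using sub1 fJ' unfolding chain_decrease_def by (simp add: card_mono)
    qed
    have "?D' \<subseteq> insert r ?D" by (auto simp: less_Suc_eq)
    have D'le: "card ?D' \<le> card ?D + (if f ?y < f (x r) then 1 else 0)"
    proof (cases "f ?y < f (x r)")
      case True
      have "?D' \<subseteq> insert r ?D" by (auto simp: less_Suc_eq)
      then have "card ?D' \<le> card (insert r ?D)" using fD by (intro card_mono) auto
      also have "\<dots> \<le> card ?D + 1" using fD by (simp add: card_insert_if)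
      finally show ?thesis using True by simp
    next
      case False
      have "?D' = ?D" using False by (auto simp: less_Suc_eq)
      then show ?thesis by simp
    qed
    show ?thesis
    proof (intro exI[of _ ?c] conjI)
      show "is_chain k m ?c" by (rule chain)
      show "?c \<noteq> []" by simp
      show "last ?c = x (Suc r)" by simp
      show "\<forall>y\<in>set ?c. tle y (last ?c)"
      proof
        fix y assume "y \<in> set ?c"
        then consider "y \<in> set c" | "y = ?y" by auto
        then show "tle y (last ?c)"
        proof cases
          case 1
          then have "tle y (x r)" using c by auto
          then show ?thesis using le tle_trans by simp
        next
          case 2
          then show ?thesis by (simp add: tle_refl)
        qed
      qed
      show "card ?D' \<le> chain_decrease {f} ?c" using D'le cd c(5) by linarith
    qed
  qed
qed


lemma seg:
  assumes "\<forall>i<r. x i \<in> tuples k m" "\<forall>i. Suc i < r \<longrightarrow> tle (x i) (x (Suc i))"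
  shows "card {i. Suc i < r \<and> f (x (Suc i)) < f (x i)} \<le> decrease k m {f}"
proof (cases r)
  case 0
  then show ?thesis by simp
next
  case (Suc r')
  then obtain c where "is_chain k m c"
    "card {i. Suc i < Suc r' \<and> f (x (Suc i)) < f (x i)} \<le> chain_decrease {f} c"
    using chain_exists[of r' x k m f] assms by auto
  then have "card {i. Suc i < Suc r' \<and> f (x (Suc i)) < f (x i)} \<le> decrease k m {f}"
    using dec_ge[of k m c "{f}"] by (meson le_trans)
  with Suc show ?thesis by simp
qed

lemma drops:
  assumes "B \<subseteq> {i. Suc i < r}" "\<forall>i<r. x i \<in> tuples k m"
    "\<forall>i. Suc i < r \<and> i \<notin> B \<longrightarrow> tle (x i) (x (Suc i))"
  shows "card {i. Suc i < r \<and> i \<notin> B \<and> f (x (Suc i)) < f (x i)} \<le> (card B + 1) * decrease k m {f}"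
  using assms
proof (induction r arbitrary: B rule: less_induct)
  case (less r)
  show ?case
  proof (cases "B = {}")
    case True
    then show ?thesis using seg[of r x k m f] less.prems by simp
  next
    case False
    let ?d = "decrease k m {f}"
    have fB: "finite B" using less.prems(1) by (rule finite_subset) (rule finite_subset[of _ "{..<r}"], auto)
    define b where "b = Max B"
    have bB: "b \<in> B" using fB False b_def by simp
    have bmax: "\<forall>i\<in>B. i \<le> b" using fB b_def by simp
    have br: "Suc b < r" using bB less.prems(1) by auto
    let ?B' = "B - {b}"
    let ?A1 = "{i. Suc i < Suc b \<and> i \<notin> ?B' \<and> f (x (Suc i)) < f (x i)}"
    have A1: "card ?A1 \<le> (card ?B' + 1) * ?d"
    proof (rule less.IH)
      show "Suc b < r" by (rule br)
      show "?B' \<subseteq> {i. Suc i < Suc b}" using bmax by force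
      show "\<forall>i<Suc b. x i \<in> tuples k m" using less.prems(2) br by auto
      show "\<forall>i. Suc i < Suc b \<and> i \<notin> ?B' \<longrightarrow> tle (x i) (x (Suc i))"
        using less.prems(3) br by auto
    qed
    have cB': "card ?B' + 1 = card B" using fB bB
      by (metis Suc_eq_plus1 card_Suc_Diff1)
    define y where "y i = x (Suc b + i)" for i
    let ?A2 = "{i. Suc i < r - Suc b \<and> f (y (Suc i)) < f (y i)}"
    have A2: "card ?A2 \<le> ?d"
    proof (rule seg)
      show "\<forall>i<r - Suc b. y i \<in> tuples k m" using less.prems(2) y_def by auto
      show "\<forall>i. Suc i < r - Suc b \<longrightarrow> tle (y i) (y (Suc i))"
      proof (intro allI impI)
        fix i assume i: "Suc i < r - Suc b"
        have "Suc b + i \<notin> B" using bmax by fastforce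
        then show "tle (y i) (y (Suc i))" using less.prems(3) i y_def by auto
      qed
    qed
    let ?A = "{i. Suc i < r \<and> i \<notin> B \<and> f (x (Suc i)) < f (x i)}"
    have sub: "?A \<subseteq> ?A1 \<union> (\<lambda>i. Suc b + i) ` ?A2"
    proof
      fix i assume i: "i \<in> ?A"
      show "i \<in> ?A1 \<union> (\<lambda>i. Suc b + i) ` ?A2"
      proof (cases "i < b")
        case True
        then show ?thesis using i by auto
      next
        case False
        then have "b < i" using i bB by (cases "i = b") auto
        then have "i = Suc b + (i - Suc b)" "i - Suc b \<in> ?A2" using i y_def by auto
        then show ?thesis by blast
      qed
    qed
    have fA1: "finite ?A1" by (rule finite_subset[of _ "{..<Suc b}"]) auto
    have fA2: "finite ?A2" by (rule finite_subset[of _ "{..<r}"]) auto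
    have "card ?A \<le> card (?A1 \<union> (\<lambda>i. Suc b + i) ` ?A2)"
      using sub fA1 fA2 by (intro card_mono) auto
    also have "\<dots> \<le> card ?A1 + card ((\<lambda>i. Suc b + i) ` ?A2)" by (rule card_Un_le)
    also have "\<dots> \<le> card ?A1 + card ?A2" using card_image_le[OF fA2] by simp
    also have "\<dots> \<le> (card ?B' + 1) * ?d + ?d" using A1 A2 by (rule add_mono)
    also have "\<dots> = card B * ?d + ?d" using cB' by simp
    finally show ?thesis by (simp add: algebra_simps)
  qed
qed

lemma circ_vals_snoc:
  "circ_vals \<omega> (gs @ [g]) xs = circ_vals \<omega> gs xs @ [gate_apply \<omega> g (circ_vals \<omega> gs xs)]"
  by (simp add: circ_vals_def)

lemma circ_vals_Nil: "circ_vals \<omega> [] xs = xs"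
  by (simp add: circ_vals_def)

lemma length_circ_vals: "length (circ_vals \<omega> gs xs) = length xs + length gs"
  by (induct gs rule: rev_induct) (simp_all add: circ_vals_snoc circ_vals_Nil)

lemma wf_snoc:
  assumes "wf_circuit k p ar n (gs @ [g])"
  shows "wf_circuit k p ar n gs \<and> gate_ok k p ar g \<and> (\<forall>a\<in>set (gate_args g). a < n + length gs)"
proof -
  have H: "\<And>j. j < Suc (length gs) \<Longrightarrow> gate_ok k p ar ((gs @ [g]) ! j) \<and>
      (\<forall>a\<in>set (gate_args ((gs @ [g]) ! j)). a < n + j)"
    using assms unfolding wf_circuit_def by auto
  have "wf_circuit k p ar n gs" unfolding wf_circuit_def
  proof (intro allI impI)
    fix j assume j: "j < length gs"
    then show "gate_ok k p ar (gs ! j) \<and> (\<forall>a\<in>set (gate_args (gs ! j)). a < n + j)"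
      using H[of j] by (simp add: nth_append)
  qed
  moreover have "gate_ok k p ar g \<and> (\<forall>a\<in>set (gate_args g). a < n + length gs)"
    using H[of "length gs"] by simp
  ultimately show ?thesis by simp
qed

lemma cost_snoc: "circ_cost (gs @ [g]) = circ_cost gs + (if is_omega_gate g then 1 else 0)"
  by (simp add: circ_cost_def)

lemma map_tuples: "V \<in> tuples k N \<Longrightarrow> \<forall>a\<in>set as. a < N \<Longrightarrow> map (\<lambda>j. V ! j) as \<in> tuples k (length as)"
  unfolding tuples_def by auto

lemma vals_tuples:
  assumes om: "\<forall>j<p. in_P k (ar j) (\<omega> j)" and xs: "xs \<in> tuples k n" and wf: "wf_circuit k p ar n gs"
  shows "circ_vals \<omega> gs xs \<in> tuples k (n + length gs)"
  using wf
proof (induction gs rule: rev_induct)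
  case Nil
  then show ?case using xs by (simp add: circ_vals_Nil)
next
  case (snoc g gs)
  have w: "wf_circuit k p ar n gs" "gate_ok k p ar g" "\<forall>a\<in>set (gate_args g). a < n + length gs"
    using wf_snoc[OF snoc.prems] by auto
  let ?V = "circ_vals \<omega> gs xs"
  have V: "?V \<in> tuples k (n + length gs)" using snoc.IH w by simp
  have "gate_apply \<omega> g ?V < k"
  proof (cases g)
    case (MGate h as)
    then have "map (\<lambda>j. ?V ! j) as \<in> tuples k (length as)" using map_tuples[OF V] w by simp
    then show ?thesis using MGate w by (auto simp: in_P_def)
  next
    case (OGate i as)
    have m: "map (\<lambda>j. ?V ! j) as \<in> tuples k (length as)"
      using map_tuples[OF V, of as] w OGate by auto
    have "length as = ar i" "i < p" using w OGate by auto
    then have "map (\<lambda>j. ?V ! j) as \<in> tuples k (ar i)" "i < p" using m by auto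
    then show ?thesis using OGate om by (auto simp: in_P_def)
  qed
  then show ?case using V by (simp add: circ_vals_snoc tuples_def)
qed


lemma BP:
  assumes om: "\<forall>j<p. in_P k (ar j) (\<omega> j)" and dB: "\<forall>j<p. decrease k (ar j) {\<omega> j} \<le> D"
    and xt: "\<forall>i<r. x i \<in> tuples k n" and xle: "\<forall>i. Suc i < r \<longrightarrow> tle (x i) (x (Suc i))"
    and wf: "wf_circuit k p ar n gs"
  shows "card {i. Suc i < r \<and> \<not> tle (circ_vals \<omega> gs (x i)) (circ_vals \<omega> gs (x (Suc i)))} + 1
           \<le> (D + 1) ^ circ_cost gs"
  using wf
proof (induction gs rule: rev_induct)
  case Nil
  have "{i. Suc i < r \<and> \<not> tle (circ_vals \<omega> [] (x i)) (circ_vals \<omega> [] (x (Suc i)))} = {}"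
    using xle by (auto simp: circ_vals_Nil)
  then show ?case by (simp only: card.empty circ_cost_def) simp
next
  case (snoc g gs)
  have w: "wf_circuit k p ar n gs" "gate_ok k p ar g" "\<forall>a\<in>set (gate_args g). a < n + length gs"
    using wf_snoc[OF snoc.prems] by auto
  define V where "V i = circ_vals \<omega> gs (x i)" for i
  define B where "B = {i. Suc i < r \<and> \<not> tle (V i) (V (Suc i))}"
  have IH: "card B + 1 \<le> (D + 1) ^ circ_cost gs" using snoc.IH w unfolding B_def V_def by simp
  have VT: "\<And>i. i < r \<Longrightarrow> V i \<in> tuples k (n + length gs)"
    unfolding V_def using vals_tuples[OF om _ w(1)] xt by simp
  have lenV: "\<And>i. i < r \<Longrightarrow> length (V i) = n + length gs"
    using VT unfolding tuples_def by simp
  define out where "out i = gate_apply \<omega> g (V i)" for i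
  let ?N = "{i. Suc i < r \<and> \<not> tle (circ_vals \<omega> (gs @ [g]) (x i)) (circ_vals \<omega> (gs @ [g]) (x (Suc i)))}"
  have N: "?N = {i. Suc i < r \<and> \<not> (tle (V i) (V (Suc i)) \<and> out i \<le> out (Suc i))}"
  proof -
    have "\<And>i. Suc i < r \<Longrightarrow> tle (circ_vals \<omega> (gs @ [g]) (x i)) (circ_vals \<omega> (gs @ [g]) (x (Suc i)))
       \<longleftrightarrow> tle (V i) (V (Suc i)) \<and> out i \<le> out (Suc i)"
    proof -
      fix i assume i: "Suc i < r"
      have "length (V i) = length (V (Suc i))" using lenV i by simp
      then show "?thesis i" unfolding circ_vals_snoc V_def[symmetric] out_def[symmetric]
        using tle_snoc by blast
    qed
    then show ?thesis by auto
  qed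
  have fB: "finite B" unfolding B_def by (rule finite_subset[of _ "{..<r}"]) auto
  have argle: "\<And>i as. Suc i < r \<Longrightarrow> i \<notin> B \<Longrightarrow> \<forall>a\<in>set as. a < n + length gs \<Longrightarrow>
      tle (map (\<lambda>j. V i ! j) as) (map (\<lambda>j. V (Suc i) ! j) as)"
    using lenV unfolding B_def by (intro tle_map) auto
  show ?case
  proof (cases g)
    case (MGate h as)
    have "?N \<subseteq> B"
    proof
      fix i assume i: "i \<in> ?N"
      show "i \<in> B"
      proof (rule ccontr)
        assume nB: "i \<notin> B"
        have ir: "Suc i < r" using i by simp
        have le: "tle (V i) (V (Suc i))" using nB ir unfolding B_def by simp
        have t1: "map (\<lambda>j. V i ! j) as \<in> tuples k (length as)"
          using map_tuples[OF VT, of i as] ir w MGate by simp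
        have t2: "map (\<lambda>j. V (Suc i) ! j) as \<in> tuples k (length as)"
          using map_tuples[OF VT, of "Suc i" as] ir w MGate by simp
        have "tle (map (\<lambda>j. V i ! j) as) (map (\<lambda>j. V (Suc i) ! j) as)"
          using argle[OF ir nB, of as] w MGate by simp
        moreover have "monotone_fun k (length as) h" using w MGate by simp
        ultimately have "h (map (\<lambda>j. V i ! j) as) \<le> h (map (\<lambda>j. V (Suc i) ! j) as)"
          using t1 t2 unfolding monotone_fun_def by blast
        then have "out i \<le> out (Suc i)" unfolding out_def MGate by simp
        then show False using i le N by auto
      qed
    qed
    then have "card ?N \<le> card B" using fB by (rule card_mono[rotated])
    then show ?thesis using IH MGate by (simp add: cost_snoc)
  next
    case (OGate j as)
    have jp: "j < p" and la: "length as = ar j" using w OGate by auto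
    define y where "y i = map (\<lambda>a. V i ! a) as" for i
    let ?A = "{i. Suc i < r \<and> i \<notin> B \<and> \<omega> j (y (Suc i)) < \<omega> j (y i)}"
    have A: "card ?A \<le> (card B + 1) * decrease k (ar j) {\<omega> j}"
    proof (rule drops)
      show "B \<subseteq> {i. Suc i < r}" unfolding B_def by auto
      show "\<forall>i<r. y i \<in> tuples k (ar j)"
      proof (intro allI impI)
        fix i assume "i < r"
        then have "y i \<in> tuples k (length as)"
          using map_tuples[OF VT, of i as] w OGate unfolding y_def by auto
        then show "y i \<in> tuples k (ar j)" using la by simp
      qed
      show "\<forall>i. Suc i < r \<and> i \<notin> B \<longrightarrow> tle (y i) (y (Suc i))"
        using argle w OGate unfolding y_def by auto
    qed
    also have "\<dots> \<le> (card B + 1) * D" using dB jp by (intro mult_left_mono) auto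
    finally have A': "card ?A \<le> (card B + 1) * D" .
    have "?N \<subseteq> B \<union> ?A"
    proof
      fix i assume i: "i \<in> ?N"
      show "i \<in> B \<union> ?A"
      proof (cases "i \<in> B")
        case False
        then have "tle (V i) (V (Suc i))" using i unfolding B_def by auto
        then have "\<not> out i \<le> out (Suc i)" using i N by auto
        then show ?thesis using False i unfolding out_def y_def OGate by auto
      qed simp
    qed
    moreover have "finite ?A" by (rule finite_subset[of _ "{..<r}"]) auto
    ultimately have "card ?N \<le> card (B \<union> ?A)" using fB by (intro card_mono) auto
    also have "\<dots> \<le> card B + card ?A" by (rule card_Un_le)
    finally have "card ?N + 1 \<le> (card B + 1) * (D + 1)" using A' by (simp add: algebra_simps)
    also have "\<dots> \<le> (D + 1) ^ circ_cost gs * (D + 1)" using IH by (rule mult_right_mono) simp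
    finally show ?thesis using OGate by (simp add: cost_snoc mult.commute)
  qed
qed

lemma dec_finite: "finite {chain_decrease F c | c. is_chain k m c}"
proof -
  have "{chain_decrease F c | c. is_chain k m c} \<subseteq> {..card (tuples k m)}"
    using chain_decrease_le_len chain_len by (fastforce intro: le_trans)
  then show ?thesis using finite_subset by blast
qed

lemma log_bound:
  fixes a D t :: nat assumes "a + 1 \<le> (D + 1) ^ t"
  shows "nat \<lceil>log (real (D + 1)) (real (a + 1))\<rceil> \<le> t"
proof (cases "D = 0")
  case True
  then show ?thesis by (simp add: log_def)
next
  case False
  have b: "1 < real (D + 1)" using False by simp
  have "real (a + 1) \<le> real (D + 1) ^ t" using assms by (metis of_nat_le_iff of_nat_power)
  then have "log (real (D + 1)) (real (a + 1)) \<le> log (real (D + 1)) (real (D + 1) ^ t)"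
    using b by (subst log_le_cancel_iff) auto
  also have "\<dots> = real t" using b by (subst log_pow_cancel) auto
  finally have "\<lceil>log (real (D + 1)) (real (a + 1))\<rceil> \<le> int t" by (simp add: ceiling_le_iff)
  then show ?thesis by (simp add: nat_le_iff)
qed

theorem theorem1:
  fixes k p n :: nat and \<omega> :: "nat \<Rightarrow> nat list \<Rightarrow> nat" and ar :: "nat \<Rightarrow> nat"
    and F :: "(nat list \<Rightarrow> nat) set"
  assumes "k \<ge> 2" and "p \<ge> 1"
    and "\<forall>i<p. in_P k (ar i) (\<omega> i) \<and> \<not> monotone_fun k (ar i) (\<omega> i)"
    and "finite F" and "\<forall>f\<in>F. in_P k n f"
  shows "I_B k p \<omega> ar n F \<ge>
     enat (nat \<lceil>log (real (decrease_B k p \<omega> ar + 1)) (real (decrease k n F + 1))\<rceil>)"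
proof -
  let ?D = "decrease_B k p \<omega> ar"
  have om: "\<forall>j<p. in_P k (ar j) (\<omega> j)" using assms(3) by simp
  have dB: "\<forall>j<p. decrease k (ar j) {\<omega> j} \<le> ?D"
    unfolding decrease_B_def by (auto intro: Max_ge)
  obtain c where c: "is_chain k n c" "decrease k n F = chain_decrease F c"
  proof -
    have "is_chain k n []" by (simp add: is_chain_def)
    then have "decrease k n F \<in> {chain_decrease F c | c. is_chain k n c}"
      unfolding decrease_def using dec_finite by (intro Max_in) auto
    then show ?thesis using that by auto
  qed
  have ct: "\<forall>i<length c. c ! i \<in> tuples k n" using c(1) unfolding is_chain_def by auto
  have cle: "\<forall>i. Suc i < length c \<longrightarrow> tle (c ! i) (c ! Suc i)" using c(1) unfolding is_chain_def by auto
  show ?thesis unfolding I_B_def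
  proof (rule INF_greatest)
    fix gs assume "gs \<in> {gs. wf_circuit k p ar n gs \<and> realizes k \<omega> n gs F}"
    then have wf: "wf_circuit k p ar n gs" and re: "realizes k \<omega> n gs F" by auto
    let ?BP = "{i. Suc i < length c \<and> \<not> tle (circ_vals \<omega> gs (c ! i)) (circ_vals \<omega> gs (c ! Suc i))}"
    have bp: "card ?BP + 1 \<le> (?D + 1) ^ circ_cost gs"
      using BP[OF om dB, of "length c" "\<lambda>i. c ! i", OF ct cle wf] .
    have "{i. Suc i < length c \<and> is_jump F (c ! i) (c ! Suc i)} \<subseteq> ?BP"
    proof
      fix i assume i: "i \<in> {i. Suc i < length c \<and> is_jump F (c ! i) (c ! Suc i)}"
      then obtain f where f: "f \<in> F" "f (c ! Suc i) < f (c ! i)" and ir: "Suc i < length c"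
        unfolding is_jump_def by auto
      obtain v where v: "v < n + length gs" "\<forall>xs\<in>tuples k n. circ_vals \<omega> gs xs ! v = f xs"
        using re f(1) unfolding realizes_def by blast
      have t1: "c ! i \<in> tuples k n" and t2: "c ! Suc i \<in> tuples k n" using ct ir by auto
      have "\<not> tle (circ_vals \<omega> gs (c ! i)) (circ_vals \<omega> gs (c ! Suc i))"
      proof
        assume "tle (circ_vals \<omega> gs (c ! i)) (circ_vals \<omega> gs (c ! Suc i))"
        moreover have "v < length (circ_vals \<omega> gs (c ! i))"
          using v(1) t1 by (simp add: length_circ_vals tuples_def)
        ultimately have "circ_vals \<omega> gs (c ! i) ! v \<le> circ_vals \<omega> gs (c ! Suc i) ! v"
          by (rule tle_nth)
        then show False using v(2) t1 t2 f(2) by simp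
      qed
      then show "i \<in> ?BP" using ir by simp
    qed
    moreover have "finite ?BP" by (rule finite_subset[of _ "{..<length c}"]) auto
    ultimately have "chain_decrease F c \<le> card ?BP" unfolding chain_decrease_def by (rule card_mono[rotated])
    then have "decrease k n F + 1 \<le> (?D + 1) ^ circ_cost gs" using bp c(2) by simp
    then show "enat (nat \<lceil>log (real (?D + 1)) (real (decrease k n F + 1))\<rceil>) \<le> enat (circ_cost gs)"
      using log_bound by simp
  qed
qed

end
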